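(* Let $I$ be a set and $\mathbb K$ a commutative ring. The map sending a weighted troupe $\boldsymbol{\tau}\colon\mathsf{BPT}(I)\to\mathbb K$ to its restriction $\boldsymbol{\tau}|_{\mathsf{Branch}(I)}$ is a bijection from the set of weighted troupes to the set of all functions $\mathsf{Branch}(I)\to\mathbb K$.
   Context: A binary plane tree is a rooted tree in which each child of a vertex is designated as a left child or a right child, and no vertex has more than one left child or more than one right child; trees are considered up to isomorphism, and the empty tree $\varnothing$ is allowed. A branch is a nonempty binary plane tree in which every vertex has at most one child. Let $\boxminus$ be a special symbol not a vertex of any tree. An $I$-coloring of a binary plane tree $T$ is a function $\chi\colon T\sqcup\{\boxminus\}\to I$. $\mathsf{BPT}(I)$ denotes the set of $I$-colored binary plane trees (including the empty tree) and $\mathsf{Branch}(I)$ the set of $I$-colored branches. Insertion: for nonempty $I$-colored trees $T_1,T_2$ with colorings $\chi_1,\chi_2$ and a vertex $v$ of $T_1$, the tree $\nabla_v(T_1,T_2)$ is formed by creating a new vertex $v^*$ that takes the place of $v$ in $T_1$ (attached to $v$'s former parent on the same side), making $v$ (with its subtrees) the left child of $v^*$, and attaching $T_2$ as the right subtree of $v^*$; its coloring is $\chi_1$ on $T_1\sqcup\{\boxminus\}$, $\chi_2$ on the vertices of $T_2$, and $v^*$ gets color $\chi_2(\boxminus)$. A weighted troupe is a function $\boldsymbol{\tau}\colon\mathsf{BPT}(I)\to\mathbb K$ such that $\boldsymbol{\tau}(\varnothing)=0$ and $\boldsymbol{\tau}(\nabla_v(T_1,T_2))=\boldsymbol{\tau}(T_1)\boldsymbol{\tau}(T_2)$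 for all nonempty $T_1,T_2\in\mathsf{BPT}(I)$ and all vertices $v$ of $T_1$. *)

theory Defs
  imports "HOL-Library.FuncSet"
begin

text \<open>Binary plane trees with vertex colours in 'i (up to isomorphism = as a datatype).
  Leaf is the empty tree; Node l a r is a vertex coloured a with left subtree l and right subtree r.\<close>
datatype 'i bt = Leaf | Node "'i bt" 'i "'i bt"

text \<open>An 'i-coloured binary plane tree: a tree with vertex colours, paired with the colour
  of the special symbol boxminus.\<close>
type_synonym 'i cbpt = "'i bt \<times> 'i"

text \<open>Vertices are addressed by paths from the root (False = go to left child, True = right).\<close>
fun is_vertex :: "'i bt \<Rightarrow> bool list \<Rightarrow> bool" where
  "is_vertex Leaf p = False"
| "is_vertex (Node l a r) [] = True"
| "is_vertex (Node l a r) (False # p) = is_vertex l p"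
| "is_vertex (Node l a r) (True # p) = is_vertex r p"

text \<open>graft T1 v c T2: the new vertex v* (coloured c) replaces the vertex at v,
  the old subtree at v becomes its left subtree and T2 its right subtree.\<close>
fun graft :: "'i bt \<Rightarrow> bool list \<Rightarrow> 'i \<Rightarrow> 'i bt \<Rightarrow> 'i bt" where
  "graft Leaf p c t2 = Leaf"
| "graft (Node l a r) [] c t2 = Node (Node l a r) c t2"
| "graft (Node l a r) (False # p) c t2 = Node (graft l p c t2) a r"
| "graft (Node l a r) (True # p) c t2 = Node l a (graft r p c t2)"

text \<open>Insertion nabla_v(T1,T2) on coloured trees: boxminus keeps the colour from T1,
  v* gets the boxminus colour of T2.\<close>
definition nabla :: "bool list \<Rightarrow> 'i cbpt \<Rightarrow> 'i cbpt \<Rightarrow> 'i cbpt" where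
  "nabla v T1 T2 = (graft (fst T1) v (snd T2) (fst T2), snd T1)"

fun is_branch :: "'i bt \<Rightarrow> bool" where
  "is_branch Leaf = False"
| "is_branch (Node l a r) =
     ((l = Leaf \<and> r = Leaf) \<or> (l = Leaf \<and> is_branch r) \<or> (r = Leaf \<and> is_branch l))"

definition Branch :: "'i cbpt set" where
  "Branch = {T. is_branch (fst T)}"

definition weighted_troupe :: "('i cbpt \<Rightarrow> 'k::comm_ring_1) \<Rightarrow> bool" where
  "weighted_troupe \<tau> \<longleftrightarrow>
     (\<forall>c. \<tau> (Leaf, c) = 0) \<and>
     (\<forall>T1 T2 v. fst T1 \<noteq> Leaf \<longrightarrow> fst T2 \<noteq> Leaf \<longrightarrow> is_vertex (fst T1) v \<longrightarrow>
        \<tau> (nabla v T1 T2) = \<tau> T1 * \<tau> T2)"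

end

theory Submission
  imports Defs
begin

fun spine :: "'i bt \<Rightarrow> 'i bt" where
  "spine Leaf = Leaf"
| "spine (Node l a r) =
     (if l = Leaf then Node Leaf a (spine r)
      else if r = Leaf then Node (spine l) a Leaf else spine l)"

fun ext :: "('i cbpt \<Rightarrow> 'k::comm_ring_1) \<Rightarrow> 'i bt \<Rightarrow> 'k" where
  "ext f Leaf = 1"
| "ext f (Node l a r) = ext f l *
     (if l \<noteq> Leaf \<and> r \<noteq> Leaf then f (spine r, a) * ext f r else ext f r)"

definition val :: "('i cbpt \<Rightarrow> 'k::comm_ring_1) \<Rightarrow> 'i cbpt \<Rightarrow> 'k" where
  "val f T = (if fst T = Leaf then 0 else f (spine (fst T), snd T) * ext f (fst T))"

lemma graft_nonleaf: "t \<noteq> Leaf \<Longrightarrow> graft t v a t2 \<noteq> Leaf"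
proof -
  assume "t \<noteq> Leaf"
  then obtain l b r where t: "t = Node l b r" by (cases t) auto
  show ?thesis
  proof (cases v)
    case (Cons x p)
    then show ?thesis using t by (cases x) auto
  qed (simp add: t)
qed

lemma vertex_nonleaf: "is_vertex t v \<Longrightarrow> t \<noteq> Leaf"
  by (cases t) auto

lemma graft_props:
  assumes "is_vertex t1 v" "t2 \<noteq> Leaf"
  shows "spine (graft t1 v a t2) = spine t1 \<and>
         ext f (graft t1 v a t2) = ext f t1 * (f (spine t2, a) * ext f t2)"
  using assms
proof (induction t1 v a t2 rule: graft.induct)
  case (3 l b r p c t2)
  then have "l \<noteq> Leaf" using vertex_nonleaf by auto
  with 3 graft_nonleaf[of l p c t2] show ?case by (auto simp: algebra_simps)
next
  case (4 l b r p c t2)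
  then have "r \<noteq> Leaf" using vertex_nonleaf by auto
  with 4 graft_nonleaf[of r p c t2] show ?case by (auto simp: algebra_simps)
qed auto

lemma val_troupe: "weighted_troupe (val f)"
  unfolding weighted_troupe_def
proof (intro conjI allI impI)
  fix T1 T2 :: "'a cbpt" and v
  assume h: "fst T1 \<noteq> Leaf" "fst T2 \<noteq> Leaf" "is_vertex (fst T1) v"
  obtain t1 c1 where T1: "T1 = (t1, c1)" by (cases T1)
  obtain t2 c2 where T2: "T2 = (t2, c2)" by (cases T2)
  show "val f (nabla v T1 T2) = val f T1 * val f T2"
    using h graft_props[of t1 v t2 c2 f] graft_nonleaf[of t1 v c2 t2]
    by (simp add: T1 T2 nabla_def val_def algebra_simps)
qed (simp add: val_def)

lemma branch_props: "is_branch t \<Longrightarrow> spine t = t \<and> ext f t = 1"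
  by (induction t) auto

lemma branch_nonleaf: "is_branch t \<Longrightarrow> t \<noteq> Leaf"
  by (cases t) auto

lemma size_graft: "is_vertex t1 v \<Longrightarrow> size (graft t1 v a t2) = size t1 + size t2 + 1"
  by (induction t1 v a t2 rule: graft.induct) auto

lemma decomp:
  "t \<noteq> Leaf \<Longrightarrow> \<not> is_branch t \<Longrightarrow>
   \<exists>t1 v a t2. t1 \<noteq> Leaf \<and> t2 \<noteq> Leaf \<and> is_vertex t1 v \<and> t = graft t1 v a t2"
proof (induction t)
  case Leaf
  then show ?case by simp
next
  case (Node l a r)
  show ?case
  proof (cases "l = Leaf")
    case True
    then have "r \<noteq> Leaf" "\<not> is_branch r" using Node.prems by auto
    then obtain t1 v b t2 where "t1 \<noteq> Leaf" "t2 \<noteq> Leaf" "is_vertex t1 v" "r = graft t1 v b t2"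
      using Node.IH(2) by blast
    then show ?thesis using True
      by (intro exI[of _ "Node Leaf a t1"] exI[of _ "True # v"] exI[of _ b] exI[of _ t2]) auto
  next
    case False
    show ?thesis
    proof (cases "r = Leaf")
      case True
      then have "\<not> is_branch l" using Node.prems False by auto
      then obtain t1 v b t2 where "t1 \<noteq> Leaf" "t2 \<noteq> Leaf" "is_vertex t1 v" "l = graft t1 v b t2"
        using Node.IH(1) False by blast
      then show ?thesis using True
        by (intro exI[of _ "Node t1 a Leaf"] exI[of _ "False # v"] exI[of _ b] exI[of _ t2]) auto
    next
      case False2: False
      obtain l1 b l2 where "l = Node l1 b l2" using False by (cases l) auto
      then show ?thesis using False2
        by (intro exI[of _ l] exI[of _ "[]"] exI[of _ a] exI[of _ r]) auto
    qed
  qed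
qed

lemma troupe_unique:
  assumes "weighted_troupe \<tau>"
  shows "\<tau> (t, c) = val (restrict \<tau> Branch) (t, c)"
proof (induction t arbitrary: c rule: measure_induct_rule[of size])
  case (less t)
  show ?case
  proof (cases "t = Leaf")
    case True
    then show ?thesis using assms by (simp add: weighted_troupe_def val_def)
  next
    case nl: False
    show ?thesis
    proof (cases "is_branch t")
      case True
      then show ?thesis using branch_props[OF True, of "restrict \<tau> Branch"] nl
        by (simp add: val_def Branch_def restrict_def)
    next
      case False
      then obtain t1 v a t2 where d: "t1 \<noteq> Leaf" "t2 \<noteq> Leaf" "is_vertex t1 v" "t = graft t1 v a t2"
        using decomp nl by blast
      have s: "size t1 < size t" "size t2 < size t"
        using size_graft[OF d(3), of a t2] d(1,2,4) by (cases t1; cases t2; auto)+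
      have "\<tau> (t, c) = \<tau> (nabla v (t1, c) (t2, a))" by (simp add: nabla_def d(4))
      also have "\<dots> = \<tau> (t1, c) * \<tau> (t2, a)"
        using assms d unfolding weighted_troupe_def by auto
      also have "\<dots> = val (restrict \<tau> Branch) (t1, c) * val (restrict \<tau> Branch) (t2, a)"
        using less[OF s(1)] less[OF s(2)] by (simp only:)
      also have "\<dots> = val (restrict \<tau> Branch) (nabla v (t1, c) (t2, a))"
        using val_troupe[of "restrict \<tau> Branch"] d unfolding weighted_troupe_def by auto
      also have "\<dots> = val (restrict \<tau> Branch) (t, c)" by (simp add: nabla_def d(4))
      finally show ?thesis .
    qed
  qed
qed

theorem proposition3p2:
  shows "bij_betw (\<lambda>\<tau>. restrict \<tau> Branch)
           {\<tau> :: 'i cbpt \<Rightarrow> 'k::comm_ring_1. weighted_troupe \<tau>}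
           ((Branch :: 'i cbpt set) \<rightarrow>\<^sub>E (UNIV :: 'k set))"
proof (rule bij_betwI[where g = val])
  show "(\<lambda>\<tau>. restrict \<tau> Branch) \<in> {\<tau> :: 'i cbpt \<Rightarrow> 'k. weighted_troupe \<tau>} \<rightarrow> Branch \<rightarrow>\<^sub>E UNIV"
    by auto
  show "val \<in> ((Branch :: 'i cbpt set) \<rightarrow>\<^sub>E (UNIV :: 'k set)) \<rightarrow> {\<tau>. weighted_troupe \<tau>}"
    using val_troupe by auto
  show "val (restrict \<tau> Branch) = \<tau>" if "\<tau> \<in> {\<tau> :: 'i cbpt \<Rightarrow> 'k. weighted_troupe \<tau>}" for \<tau>
  proof
    fix T :: "'i cbpt"
    show "val (restrict \<tau> Branch) T = \<tau> T"
      using troupe_unique[of \<tau> "fst T" "snd T"] that by simp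
  qed
  show "restrict (val f) Branch = f" if f: "f \<in> (Branch :: 'i cbpt set) \<rightarrow>\<^sub>E (UNIV :: 'k set)" for f
  proof
    fix T :: "'i cbpt"
    show "restrict (val f) Branch T = f T"
    proof (cases "T \<in> Branch")
      case True
      then have "is_branch (fst T)" by (simp add: Branch_def)
      then show ?thesis using True branch_props[of "fst T" f] branch_nonleaf[of "fst T"]
        by (simp add: val_def)
    next
      case False
      then show ?thesis using f by (cases T) (auto simp: PiE_def extensional_def)
    qed
  qed
qed

end
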